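(* Let $L\subseteq Q$ be a dense extension of Lie algebras. Then $[L,L]\subseteq [Q,Q]$ is also a dense extension.
   Context: Lie algebras over a commutative unital ring $\Phi$; $[L,L]$ is the span of brackets of elements of $L$. For a Lie algebra $Q$, $M(Q)$ is the subalgebra of $\mathrm{End}_\Phi(Q)$ generated by the identity and all $\mathrm{ad}_x$, $x\in Q$, where $\mathrm{ad}_x(y)=[x,y]$. An extension $L\subseteq Q$ (i.e. $L$ a subalgebra of $Q$) is dense if the only $\mu\in M(Q)$ with $\mu(L)=0$ is $\mu=0$. *)

theory Defs
  imports Complex_Main
begin

text \<open>A Lie algebra over the commutative unital ring 'a is represented by a carrier set Q
inside an ambient 'a-module 'b (scalar multiplication sc), with a bracket br that
is bilinear, alternating and satisfies the Jacobi identity on Q.\<close>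

definition lie_algebra ::
  "('a::comm_ring_1 \<Rightarrow> 'b::ab_group_add \<Rightarrow> 'b) \<Rightarrow> ('b \<Rightarrow> 'b \<Rightarrow> 'b) \<Rightarrow> 'b set \<Rightarrow> bool" where
  "lie_algebra sc br Q \<longleftrightarrow>
     module sc \<and> module.subspace sc Q \<and>
     (\<forall>x\<in>Q. \<forall>y\<in>Q. br x y \<in> Q) \<and>
     (\<forall>x\<in>Q. \<forall>y\<in>Q. \<forall>z\<in>Q. br (x + y) z = br x z + br y z) \<and>
     (\<forall>x\<in>Q. \<forall>y\<in>Q. \<forall>z\<in>Q. br x (y + z) = br x y + br x z) \<and>
     (\<forall>c. \<forall>x\<in>Q. \<forall>y\<in>Q. br (sc c x) y = sc c (br x y)) \<and>
     (\<forall>c. \<forall>x\<in>Q. \<forall>y\<in>Q. br x (sc c y) = sc c (br x y)) \<and>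
     (\<forall>x\<in>Q. br x x = 0) \<and>
     (\<forall>x\<in>Q. \<forall>y\<in>Q. \<forall>z\<in>Q. br x (br y z) + br y (br z x) + br z (br x y) = 0)"

definition lie_subalgebra ::
  "('a::comm_ring_1 \<Rightarrow> 'b::ab_group_add \<Rightarrow> 'b) \<Rightarrow> ('b \<Rightarrow> 'b \<Rightarrow> 'b) \<Rightarrow> 'b set \<Rightarrow> 'b set \<Rightarrow> bool" where
  "lie_subalgebra sc br L Q \<longleftrightarrow>
     L \<subseteq> Q \<and> module.subspace sc L \<and> (\<forall>x\<in>L. \<forall>y\<in>L. br x y \<in> L)"

definition derived ::
  "('a::comm_ring_1 \<Rightarrow> 'b::ab_group_add \<Rightarrow> 'b) \<Rightarrow> ('b \<Rightarrow> 'b \<Rightarrow> 'b) \<Rightarrow> 'b set \<Rightarrow> 'b set" where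
  "derived sc br L = module.span sc {br x y | x y. x \<in> L \<and> y \<in> L}"

text \<open>M(Q): the subalgebra of End(Q) generated by the identity and all ad_x, x in Q.
Elements are represented by functions 'b => 'b; only their restriction to Q matters.\<close>
inductive_set mult_alg ::
  "('a::comm_ring_1 \<Rightarrow> 'b::ab_group_add \<Rightarrow> 'b) \<Rightarrow> ('b \<Rightarrow> 'b \<Rightarrow> 'b) \<Rightarrow> 'b set \<Rightarrow> ('b \<Rightarrow> 'b) set"
  for sc br Q where
  ma_id: "id \<in> mult_alg sc br Q"
| ma_ad: "x \<in> Q \<Longrightarrow> (\<lambda>y. br x y) \<in> mult_alg sc br Q"
| ma_zero: "(\<lambda>y. 0) \<in> mult_alg sc br Q"
| ma_add: "f \<in> mult_alg sc br Q \<Longrightarrow> g \<in> mult_alg sc br Q \<Longrightarrow> (\<lambda>y. f y + g y) \<in> mult_alg sc br Q"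
| ma_scale: "f \<in> mult_alg sc br Q \<Longrightarrow> (\<lambda>y. sc c (f y)) \<in> mult_alg sc br Q"
| ma_comp: "f \<in> mult_alg sc br Q \<Longrightarrow> g \<in> mult_alg sc br Q \<Longrightarrow> f \<circ> g \<in> mult_alg sc br Q"

definition dense_ext ::
  "('a::comm_ring_1 \<Rightarrow> 'b::ab_group_add \<Rightarrow> 'b) \<Rightarrow> ('b \<Rightarrow> 'b \<Rightarrow> 'b) \<Rightarrow> 'b set \<Rightarrow> 'b set \<Rightarrow> bool" where
  "dense_ext sc br L Q \<longleftrightarrow> lie_subalgebra sc br L Q \<and>
     (\<forall>\<mu>\<in>mult_alg sc br Q. (\<forall>l\<in>L. \<mu> l = 0) \<longrightarrow> (\<forall>q\<in>Q. \<mu> q = 0))"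

end

theory Submission
  imports Defs
begin

lemma ma_props:
  assumes LA: "lie_algebra sc br Q" and f: "f \<in> mult_alg sc br Q"
  shows "(\<forall>y\<in>Q. f y \<in> Q) \<and> (\<forall>a\<in>Q. \<forall>b\<in>Q. f (a + b) = f a + f b)
     \<and> (\<forall>c. \<forall>a\<in>Q. f (sc c a) = sc c (f a))"
proof -
  interpret m: module sc using LA by (simp add: lie_algebra_def)
  have S: "m.subspace Q" using LA by (simp add: lie_algebra_def)
  from f show ?thesis
  proof induction
    case ma_id then show ?case by simp
  next
    case (ma_ad x) then show ?case using LA by (simp add: lie_algebra_def)
  next
    case ma_zero then show ?case using S by (simp add: m.subspace_0)
  next
    case (ma_add f g) then show ?case using S
      by (simp add: m.subspace_add m.scale_right_distrib algebra_simps)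
  next
    case (ma_scale f c) then show ?case using S
      by (auto simp add: m.subspace_scale m.scale_right_distrib mult.commute)
  next
    case (ma_comp f g) then show ?case by simp
  qed
qed

lemma ma_mono:
  assumes "f \<in> mult_alg sc br Q'" and "Q' \<subseteq> Q"
  shows "f \<in> mult_alg sc br Q"
  using assms by induction (auto intro: mult_alg.intros)

theorem mainTheorem12:
  fixes sc :: "'a::comm_ring_1 \<Rightarrow> 'b::ab_group_add \<Rightarrow> 'b"
    and br :: "'b \<Rightarrow> 'b \<Rightarrow> 'b"
    and L Q :: "'b set"
  assumes "lie_algebra sc br Q"
    and "dense_ext sc br L Q"
  shows "dense_ext sc br (derived sc br L) (derived sc br Q)"
proof -
  note LA = assms(1)
  interpret m: module sc using LA by (simp add: lie_algebra_def)
  have SQ: "m.subspace Q" using LA by (simp add: lie_algebra_def)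
  have brQ: "\<forall>x\<in>Q. \<forall>y\<in>Q. br x y \<in> Q" using LA by (simp add: lie_algebra_def)
  have sub: "lie_subalgebra sc br L Q" and dens: "\<forall>\<mu>\<in>mult_alg sc br Q. (\<forall>l\<in>L. \<mu> l = 0) \<longrightarrow> (\<forall>q\<in>Q. \<mu> q = 0)"
    using assms(2) by (auto simp: dense_ext_def)
  have LQ: "L \<subseteq> Q" and SL: "m.subspace L" and brL: "\<forall>x\<in>L. \<forall>y\<in>L. br x y \<in> L"
    using sub by (auto simp: lie_subalgebra_def)
  have dQ: "derived sc br Q \<subseteq> Q"
    unfolding derived_def by (rule m.span_minimal) (use SQ brQ in auto)
  have dL: "derived sc br L \<subseteq> L"
    unfolding derived_def by (rule m.span_minimal) (use SL brL in auto)
  have dLQ: "derived sc br L \<subseteq> derived sc br Q"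
    unfolding derived_def by (rule m.span_mono) (use LQ in blast)
  have subd: "lie_subalgebra sc br (derived sc br L) (derived sc br Q)"
    unfolding lie_subalgebra_def
  proof (intro conjI ballI)
    show "m.subspace (derived sc br L)" unfolding derived_def by simp
    fix x y assume "x \<in> derived sc br L" "y \<in> derived sc br L"
    then have "x \<in> L" "y \<in> L" using dL by auto
    then show "br x y \<in> derived sc br L" unfolding derived_def
      by (intro m.span_superset[THEN subsetD]) blast
  qed (rule dLQ)
  have dense2: "\<forall>q\<in>derived sc br Q. \<mu> q = 0"
    if mu: "\<mu> \<in> mult_alg sc br (derived sc br Q)" and kill: "\<forall>l\<in>derived sc br L. \<mu> l = 0" for \<mu>
  proof -
    have muQ: "\<mu> \<in> mult_alg sc br Q" using ma_mono[OF mu dQ] .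
    note P = ma_props[OF LA muQ]
    have mu0: "\<mu> 0 = 0"
    proof -
      have "\<mu> (0 + 0) = \<mu> 0 + \<mu> 0" using P SQ m.subspace_0 by blast
      then show ?thesis by simp
    qed
    have muneg: "\<mu> (- a) = - \<mu> a" if "a \<in> Q" for a
    proof -
      have "-a \<in> Q" using SQ that m.subspace_neg by blast
      then have "\<mu> (a + - a) = \<mu> a + \<mu> (- a)" using P that by blast
      then show ?thesis using mu0 by (simp add: eq_neg_iff_add_eq_0 add.commute)
    qed
    have step1: "\<mu> (br l q) = 0" if l: "l \<in> L" and q: "q \<in> Q" for l q
    proof -
      have "\<mu> \<circ> (\<lambda>y. br l y) \<in> mult_alg sc br Q"
        using muQ l LQ by (auto intro: mult_alg.intros)
      moreover have "\<forall>l'\<in>L. (\<mu> \<circ> (\<lambda>y. br l y)) l' = 0"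
        using kill l unfolding derived_def
        by (auto intro!: m.span_superset[THEN subsetD])
      ultimately show ?thesis using dens q by auto
    qed
    have step2: "\<mu> (br q q') = 0" if q: "q \<in> Q" and q': "q' \<in> Q" for q q'
    proof -
      have "\<mu> \<circ> (\<lambda>y. br q y) \<in> mult_alg sc br Q"
        using muQ q by (auto intro: mult_alg.intros)
      moreover have "\<forall>l\<in>L. (\<mu> \<circ> (\<lambda>y. br q y)) l = 0"
      proof
        fix l assume l: "l \<in> L"
        then have lQ: "l \<in> Q" using LQ by auto
        have anti: "br q l = - br l q"
        proof -
          have "br (q + l) (q + l) = 0" "br q q = 0" "br l l = 0"
            using LA q lQ SQ m.subspace_add by (auto simp: lie_algebra_def)
          moreover have "br (q + l) (q + l) = br q q + br q l + (br l q + br l l)"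
          proof -
            have ql: "q + l \<in> Q" using q lQ SQ m.subspace_add by blast
            have A1: "\<forall>x\<in>Q. \<forall>y\<in>Q. \<forall>z\<in>Q. br (x + y) z = br x z + br y z"
              and A2: "\<forall>x\<in>Q. \<forall>y\<in>Q. \<forall>z\<in>Q. br x (y + z) = br x y + br x z"
              using LA by (simp_all add: lie_algebra_def)
            have "br (q + l) (q + l) = br q (q + l) + br l (q + l)"
              using A1 q lQ ql by blast
            also have "\<dots> = br q q + br q l + (br l q + br l l)"
              using A2 q lQ by simp
            finally show ?thesis .
          qed
          ultimately show ?thesis by (simp add: eq_neg_iff_add_eq_0)
        qed
        have "br l q \<in> Q" using brQ lQ q by auto
        then show "(\<mu> \<circ> (\<lambda>y. br q y)) l = 0" using anti muneg step1[OF l q] by simp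
      qed
      ultimately show ?thesis using dens q' by auto
    qed
    show ?thesis
    proof
      fix x assume x: "x \<in> derived sc br Q"
      have "m.subspace {x\<in>Q. \<mu> x = 0}"
        unfolding m.subspace_def using SQ P mu0
        by (auto simp: m.subspace_0 m.subspace_add m.subspace_scale)
      then have "derived sc br Q \<subseteq> {x\<in>Q. \<mu> x = 0}"
        unfolding derived_def by (intro m.span_minimal) (auto simp: step2 brQ)
      then show "\<mu> x = 0" using x by auto
    qed
  qed
  show ?thesis unfolding dense_ext_def using subd dense2 by blast
qed

end
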